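(* Let $G$ be a simple stochastic game (not necessarily stopping). Consider the Generic Strategy Improvement Algorithm (GSIA): start from an arbitrary positional MAX strategy $\sigma$; while $(\sigma,\tau(\sigma))$ is not a pair of optimal strategies of $G$, choose any subset $A$ of the arcs of $G$, find any positional MAX strategy $\sigma'$ with $\sigma' \succ_{G[A,\sigma]} \sigma$, and set $\sigma\leftarrow\sigma'$; finally return $(\sigma,\tau(\sigma))$, where $\tau(\sigma)$ is a positional best response to $\sigma$. Then, regardless of the choice of the initial strategy, of the sets $A$ and of the strategies $\sigma'$, GSIA terminates and returns a pair of optimal strategies.
   Context: A simple stochastic game (SSG) $G$ is a finite directed graph whose vertex set is partitioned into MAX vertices, MIN vertices, random vertices and a nonempty set of sinks; every non-sink vertex has at least one outgoing arc, every sink has exactly one outgoing arc, a self-loop; each random vertex $x$ carries a rational probability distribution $p_x$ on its out-neighbourhood, positive on every out-neighbour; each sink $s$ has rational value $\mathrm{Val}(s)\in[0,1]$. $G$ is stopping if under every pair of strategies the play reaches a sink with probability $1$. A positional MAX (resp. MIN) strategy assigns to each MAX (resp. MIN) vertex one of its out-neighbours. Under $\sigma,\tau$ from start $x_0$, the random play moves from MAX vertex $x$ to $\sigma(x)$, from MIN vertex $x$ to $\tau(x)$, from random vertex $x$ to an out-neighbour drawn by $p_x$ independently, and stays at a sink once reached; its value is $\mathrm{Val}(s)$ if it reaches sink $s$, else $0$, and $v^G_{\sigma,\tau}(x_0)$ is its expectation. A best response to $\sigma$ is a positional MIN strategy $\tau$ with $v_{\sigma,\tau}\le v_{\sigma,\tau'}$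 pointwise for all MIN strategies $\tau'$ (one exists); $v^G_\sigma:=v^G_{\sigma,\tau}$ for such $\tau$; symmetrically for best responses to a MIN strategy $\tau$ and $v^G_\tau$. A pair $(\sigma,\tau)$ of positional strategies is optimal if $v^G_{\sigma,\tau}=v^G_\sigma=v^G_\tau$, equivalently $\sigma$ maximises $v^G_\sigma$ pointwise over positional MAX strategies and $\tau$ is a best response to $\sigma$. Vectors are compared pointwise; $v>v'$ means $v\ge v'$ and $v\ne v'$. In a game $H$, $\sigma'\succ_H\sigma$ means $v^H_{\sigma'}>v^H_\sigma$ and, for every MAX vertex $x$ with $v^H_{\sigma'}(x)=v^H_\sigma(x)$, $\sigma'(x)=\sigma(x)$. Transformed game: $G[A,\sigma]$ is obtained from a copy of $G$ by replacing each arc $e=(x,y)\in A$ by an arc $(x,s_e)$ to a new sink $s_e$ of value $v^G_\sigma(y)$ (for random $x$, $p_x(s_e)=p_x(y)$); $y$ is kept. Strategies of $G$ and $G[A,\sigma]$ are identified, and value vectors of $G[A,\sigma]$ are compared only on vertices of $G$. *)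

theory Defs
  imports Complex_Main
begin

record 'v ssg =
  Vmax  :: "'v set"
  Vmin  :: "'v set"
  Vrand :: "'v set"
  Vsink :: "'v set"
  arcs  :: "('v \<times> 'v) set"
  prob  :: "'v \<Rightarrow> 'v \<Rightarrow> real"   \<comment> \<open>prob x y = p_x(y) for random x and out-neighbour y\<close>
  sval  :: "'v \<Rightarrow> real"

definition verts :: "('v, 'a) ssg_scheme \<Rightarrow> 'v set" where
  "verts G = Vmax G \<union> Vmin G \<union> Vrand G \<union> Vsink G"

definition outn :: "('v, 'a) ssg_scheme \<Rightarrow> 'v \<Rightarrow> 'v set" where
  "outn G x = {y. (x, y) \<in> arcs G}"

definition valid_ssg :: "('v, 'a) ssg_scheme \<Rightarrow> bool" where
  "valid_ssg G \<longleftrightarrow>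
     finite (verts G) \<and>
     Vmax G \<inter> Vmin G = {} \<and> Vmax G \<inter> Vrand G = {} \<and> Vmax G \<inter> Vsink G = {} \<and>
     Vmin G \<inter> Vrand G = {} \<and> Vmin G \<inter> Vsink G = {} \<and> Vrand G \<inter> Vsink G = {} \<and>
     Vsink G \<noteq> {} \<and>
     arcs G \<subseteq> verts G \<times> verts G \<and>
     (\<forall>x \<in> verts G - Vsink G. outn G x \<noteq> {}) \<and>
     (\<forall>s \<in> Vsink G. outn G s = {s}) \<and>
     (\<forall>x \<in> Vrand G. (\<forall>y \<in> outn G x. prob G x y > 0 \<and> prob G x y \<in> \<rat>) \<and>
                     (\<Sum>y \<in> outn G x. prob G x y) = 1) \<and>
     (\<forall>s \<in> Vsink G. sval G s \<in> \<rat> \<and> 0 \<le> sval G s \<and> sval G s \<le> 1)"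

text \<open>Positional strategies (only their values on MAX resp. MIN vertices matter).\<close>

definition max_strat :: "('v, 'a) ssg_scheme \<Rightarrow> ('v \<Rightarrow> 'v) \<Rightarrow> bool" where
  "max_strat G \<sigma> \<longleftrightarrow> (\<forall>x \<in> Vmax G. (x, \<sigma> x) \<in> arcs G)"

definition min_strat :: "('v, 'a) ssg_scheme \<Rightarrow> ('v \<Rightarrow> 'v) \<Rightarrow> bool" where
  "min_strat G \<tau> \<longleftrightarrow> (\<forall>x \<in> Vmin G. (x, \<tau> x) \<in> arcs G)"

definition next_exp ::
  "('v, 'a) ssg_scheme \<Rightarrow> ('v \<Rightarrow> 'v) \<Rightarrow> ('v \<Rightarrow> 'v) \<Rightarrow> ('v \<Rightarrow> real) \<Rightarrow> 'v \<Rightarrow> real" where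
  "next_exp G \<sigma> \<tau> f x =
     (if x \<in> Vmax G then f (\<sigma> x)
      else if x \<in> Vmin G then f (\<tau> x)
      else if x \<in> Vrand G then (\<Sum>y \<in> outn G x. prob G x y * f y)
      else f x)"

text \<open>\<open>hval G \<sigma> \<tau> n x\<close> = expected value of the payoff \<open>Val(X_n)\<close> if \<open>X_n\<close> is a sink and
  \<open>0\<close> otherwise, where \<open>X_n\<close> is the position after \<open>n\<close> steps of the random play from \<open>x\<close>.\<close>

fun hval :: "('v, 'a) ssg_scheme \<Rightarrow> ('v \<Rightarrow> 'v) \<Rightarrow> ('v \<Rightarrow> 'v) \<Rightarrow> nat \<Rightarrow> 'v \<Rightarrow> real" where
  "hval G \<sigma> \<tau> 0 x = (if x \<in> Vsink G then sval G x else 0)"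
| "hval G \<sigma> \<tau> (Suc n) x = next_exp G \<sigma> \<tau> (hval G \<sigma> \<tau> n) x"

text \<open>Since sinks are absorbing and have nonnegative values, \<open>hval\<close> is nondecreasing in \<open>n\<close>
  and converges to the expected payoff of the play (value of the reached sink, or 0).\<close>

definition pval :: "('v, 'a) ssg_scheme \<Rightarrow> ('v \<Rightarrow> 'v) \<Rightarrow> ('v \<Rightarrow> 'v) \<Rightarrow> 'v \<Rightarrow> real" where
  "pval G \<sigma> \<tau> x = (SUP n. hval G \<sigma> \<tau> n x)"

definition best_resp_min :: "('v, 'a) ssg_scheme \<Rightarrow> ('v \<Rightarrow> 'v) \<Rightarrow> ('v \<Rightarrow> 'v) \<Rightarrow> bool" where
  "best_resp_min G \<sigma> \<tau> \<longleftrightarrow> min_strat G \<tau> \<and>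
     (\<forall>\<tau>'. min_strat G \<tau>' \<longrightarrow> (\<forall>x \<in> verts G. pval G \<sigma> \<tau> x \<le> pval G \<sigma> \<tau>' x))"

definition best_resp_max :: "('v, 'a) ssg_scheme \<Rightarrow> ('v \<Rightarrow> 'v) \<Rightarrow> ('v \<Rightarrow> 'v) \<Rightarrow> bool" where
  "best_resp_max G \<tau> \<sigma> \<longleftrightarrow> max_strat G \<sigma> \<and>
     (\<forall>\<sigma>'. max_strat G \<sigma>' \<longrightarrow> (\<forall>x \<in> verts G. pval G \<sigma>' \<tau> x \<le> pval G \<sigma> \<tau> x))"

definition br :: "('v, 'a) ssg_scheme \<Rightarrow> ('v \<Rightarrow> 'v) \<Rightarrow> ('v \<Rightarrow> 'v)" where
  "br G \<sigma> = (SOME \<tau>. best_resp_min G \<sigma> \<tau>)"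

definition vmax :: "('v, 'a) ssg_scheme \<Rightarrow> ('v \<Rightarrow> 'v) \<Rightarrow> 'v \<Rightarrow> real" where
  "vmax G \<sigma> = pval G \<sigma> (br G \<sigma>)"

definition vmin :: "('v, 'a) ssg_scheme \<Rightarrow> ('v \<Rightarrow> 'v) \<Rightarrow> 'v \<Rightarrow> real" where
  "vmin G \<tau> = pval G (SOME \<sigma>. best_resp_max G \<tau> \<sigma>) \<tau>"

definition optimal_pair :: "('v, 'a) ssg_scheme \<Rightarrow> ('v \<Rightarrow> 'v) \<Rightarrow> ('v \<Rightarrow> 'v) \<Rightarrow> bool" where
  "optimal_pair G \<sigma> \<tau> \<longleftrightarrow> max_strat G \<sigma> \<and> min_strat G \<tau> \<and>
     (\<forall>x \<in> verts G. pval G \<sigma> \<tau> x = vmax G \<sigma> x \<and> vmax G \<sigma> x = vmin G \<tau> x)"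

text \<open>Vertices of \<open>G[A,\<sigma>]\<close>: \<open>Inl x\<close> for the copy of vertex \<open>x\<close> of \<open>G\<close>, and \<open>Inr e\<close> for
  the new sink \<open>s_e\<close>. Arcs of \<open>A\<close> leaving a sink (self-loops) are left in place, so that sinks
  remain sinks (replacing them would not change any value).\<close>

definition repl :: "('v, 'a) ssg_scheme \<Rightarrow> ('v \<times> 'v) set \<Rightarrow> ('v \<times> 'v) set" where
  "repl G A = {e \<in> A \<inter> arcs G. fst e \<notin> Vsink G}"

definition transf :: "('v, 'a) ssg_scheme \<Rightarrow> ('v \<times> 'v) set \<Rightarrow> ('v \<Rightarrow> 'v)
                       \<Rightarrow> ('v + 'v \<times> 'v) ssg" where
  "transf G A \<sigma> = \<lparr>
     Vmax = Inl ` Vmax G, Vmin = Inl ` Vmin G, Vrand = Inl ` Vrand G,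
     Vsink = Inl ` Vsink G \<union> Inr ` repl G A,
     arcs = {(Inl x, Inl y) | x y. (x, y) \<in> arcs G - repl G A}
          \<union> {(Inl x, Inr (x, y)) | x y. (x, y) \<in> repl G A}
          \<union> {(Inr e, Inr e) | e. e \<in> repl G A},
     prob = (\<lambda>a b. case (a, b) of
               (Inl x, Inl y) \<Rightarrow> prob G x y
             | (Inl x, Inr (x', y)) \<Rightarrow> (if x' = x then prob G x y else 0)
             | _ \<Rightarrow> 0),
     sval = (\<lambda>a. case a of Inl x \<Rightarrow> sval G x | Inr (x, y) \<Rightarrow> vmax G \<sigma> y) \<rparr>"

definition lift_strat :: "('v, 'a) ssg_scheme \<Rightarrow> ('v \<times> 'v) set \<Rightarrow> ('v \<Rightarrow> 'v)
                           \<Rightarrow> ('v + 'v \<times> 'v \<Rightarrow> 'v + 'v \<times> 'v)" where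
  "lift_strat G A \<sigma> = (\<lambda>a. case a of
       Inl x \<Rightarrow> (if (x, \<sigma> x) \<in> repl G A then Inr (x, \<sigma> x) else Inl (\<sigma> x))
     | Inr e \<Rightarrow> Inr e)"

definition improves :: "('v, 'a) ssg_scheme \<Rightarrow> ('v \<times> 'v) set \<Rightarrow> ('v \<Rightarrow> 'v)
                        \<Rightarrow> ('v \<Rightarrow> 'v) \<Rightarrow> bool" where
  "improves G A \<sigma> \<sigma>' \<longleftrightarrow>
     (let H = transf G A \<sigma>; w' = vmax H (lift_strat G A \<sigma>'); w = vmax H (lift_strat G A \<sigma>) in
       (\<forall>x \<in> verts G. w (Inl x) \<le> w' (Inl x)) \<and> (\<exists>x \<in> verts G. w (Inl x) \<noteq> w' (Inl x)) \<and>
       (\<forall>x \<in> Vmax G. w' (Inl x) = w (Inl x) \<longrightarrow> \<sigma>' x = \<sigma> x))"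

definition gsia_step :: "('v, 'a) ssg_scheme \<Rightarrow> ('v \<Rightarrow> 'v) \<Rightarrow> ('v \<Rightarrow> 'v) \<Rightarrow> bool" where
  "gsia_step G \<sigma> \<sigma>' \<longleftrightarrow> max_strat G \<sigma> \<and> \<not> optimal_pair G \<sigma> (br G \<sigma>) \<and>
     (\<exists>A \<subseteq> arcs G. max_strat G \<sigma>' \<and> improves G A \<sigma> \<sigma>')"

end

theory Submission
  imports Defs "HOL-Library.FuncSet"
begin


definition gwf :: "('w, 'b) ssg_scheme \<Rightarrow> bool" where
  "gwf K \<longleftrightarrow> finite (verts K) \<and>
     Vmax K \<inter> Vmin K = {} \<and> Vmax K \<inter> Vrand K = {} \<and> Vmax K \<inter> Vsink K = {} \<and>
     Vmin K \<inter> Vrand K = {} \<and> Vmin K \<inter> Vsink K = {} \<and> Vrand K \<inter> Vsink K = {} \<and>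
     arcs K \<subseteq> verts K \<times> verts K \<and>
     (\<forall>x \<in> verts K - Vsink K. outn K x \<noteq> {}) \<and>
     (\<forall>x \<in> Vrand K. (\<forall>y \<in> outn K x. prob K x y > 0) \<and> (\<Sum>y \<in> outn K x. prob K x y) = 1) \<and>
     (\<forall>s \<in> Vsink K. 0 \<le> sval K s \<and> sval K s \<le> 1)"

lemma valid_wf: "valid_ssg G \<Longrightarrow> gwf G"
  unfolding valid_ssg_def gwf_def by (elim conjE) (intro conjI; blast)

lemma gwf_fin: "gwf K \<Longrightarrow> finite (verts K)" unfolding gwf_def by (elim conjE)
lemma gwf_d1: "gwf K \<Longrightarrow> Vmax K \<inter> Vmin K = {}" unfolding gwf_def by (elim conjE)
lemma gwf_d2: "gwf K \<Longrightarrow> Vmax K \<inter> Vrand K = {}" unfolding gwf_def by (elim conjE)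
lemma gwf_d3: "gwf K \<Longrightarrow> Vmax K \<inter> Vsink K = {}" unfolding gwf_def by (elim conjE)
lemma gwf_d4: "gwf K \<Longrightarrow> Vmin K \<inter> Vrand K = {}" unfolding gwf_def by (elim conjE)
lemma gwf_d5: "gwf K \<Longrightarrow> Vmin K \<inter> Vsink K = {}" unfolding gwf_def by (elim conjE)
lemma gwf_d6: "gwf K \<Longrightarrow> Vrand K \<inter> Vsink K = {}" unfolding gwf_def by (elim conjE)
lemma gwf_arcs: "gwf K \<Longrightarrow> arcs K \<subseteq> verts K \<times> verts K" unfolding gwf_def by (elim conjE)
lemma gwf_ne: "gwf K \<Longrightarrow> \<forall>x \<in> verts K - Vsink K. outn K x \<noteq> {}" unfolding gwf_def by (elim conjE)
lemma gwf_rand: "gwf K \<Longrightarrow> \<forall>x \<in> Vrand K. (\<forall>y \<in> outn K x. prob K x y > 0) \<and> (\<Sum>y \<in> outn K x. prob K x y) = 1"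
  unfolding gwf_def by (elim conjE)
lemma gwf_sval: "gwf K \<Longrightarrow> \<forall>s \<in> Vsink K. 0 \<le> sval K s \<and> sval K s \<le> 1" unfolding gwf_def by (elim conjE)

definition csucc :: "('w, 'b) ssg_scheme \<Rightarrow> ('w \<Rightarrow> 'w) \<Rightarrow> ('w \<Rightarrow> 'w) \<Rightarrow> 'w \<Rightarrow> 'w set" where
  "csucc K \<sigma> \<tau> x =
     (if x \<in> Vmax K then {\<sigma> x} else if x \<in> Vmin K then {\<tau> x}
      else if x \<in> Vrand K then outn K x else {x})"

definition closedS :: "('w, 'b) ssg_scheme \<Rightarrow> ('w \<Rightarrow> 'w) \<Rightarrow> ('w \<Rightarrow> 'w) \<Rightarrow> 'w set \<Rightarrow> bool" where
  "closedS K \<sigma> \<tau> S \<longleftrightarrow> (\<forall>x\<in>S. csucc K \<sigma> \<tau> x \<subseteq> S)"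

definition h0 :: "('w, 'b) ssg_scheme \<Rightarrow> 'w \<Rightarrow> real" where
  "h0 K x = (if x \<in> Vsink K then sval K x else 0)"

definition mexp :: "('w, 'b) ssg_scheme \<Rightarrow> ('w \<Rightarrow> 'w) \<Rightarrow> ('w \<Rightarrow> real) \<Rightarrow> 'w \<Rightarrow> real" where
  "mexp K \<sigma> f x =
     (if x \<in> Vmax K then f (\<sigma> x)
      else if x \<in> Vmin K then Min (f ` outn K x)
      else if x \<in> Vrand K then (\<Sum>y \<in> outn K x. prob K x y * f y)
      else f x)"

fun miter :: "('w, 'b) ssg_scheme \<Rightarrow> ('w \<Rightarrow> 'w) \<Rightarrow> nat \<Rightarrow> 'w \<Rightarrow> real" where
  "miter K \<sigma> 0 x = h0 K x"
| "miter K \<sigma> (Suc n) x = mexp K \<sigma> (miter K \<sigma> n) x"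

definition lfpM :: "('w, 'b) ssg_scheme \<Rightarrow> ('w \<Rightarrow> 'w) \<Rightarrow> 'w \<Rightarrow> real" where
  "lfpM K \<sigma> x = (SUP n. miter K \<sigma> n x)"

lemma hval0: "hval K \<sigma> \<tau> 0 = h0 K"
  by (auto simp: h0_def)

lemma wf_outn_verts: "gwf K \<Longrightarrow> y \<in> outn K x \<Longrightarrow> y \<in> verts K \<and> x \<in> verts K"
  using gwf_arcs unfolding outn_def by blast

lemma wf_finite_outn: "gwf K \<Longrightarrow> finite (outn K x)"
  using wf_outn_verts gwf_fin by (metis finite_subset subsetI)

lemma wf_Vmin_ne: "gwf K \<Longrightarrow> x \<in> Vmin K \<Longrightarrow> outn K x \<noteq> {}"
  using gwf_ne gwf_d5 unfolding verts_def by blast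

lemma iter_fix:
  fixes u :: "nat \<Rightarrow> 'w \<Rightarrow> real"
  assumes inc: "\<And>n x. u n x \<le> u (Suc n) x"
    and bnd: "\<And>n x. u n x \<le> B"
    and stp: "\<And>n. u (Suc n) = Op (u n)"
    and cont: "\<And>x. (\<And>y. (\<lambda>n. u n y) \<longlonglongrightarrow> (SUP n. u n y)) \<Longrightarrow>
                    (\<lambda>n. Op (u n) x) \<longlonglongrightarrow> Op (\<lambda>y. SUP n. u n y) x"
  shows "Op (\<lambda>y. SUP n. u n y) x = (SUP n. u n x)"
proof -
  have lim: "(\<lambda>n. u n y) \<longlonglongrightarrow> (SUP n. u n y)" for y
  proof (rule LIMSEQ_incseq_SUP)
    show "bdd_above (range (\<lambda>n. u n y))" by (rule bdd_aboveI[of _ B]) (use bnd in auto)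
    show "incseq (\<lambda>n. u n y)" using inc by (simp add: incseq_SucI)
  qed
  have "(\<lambda>n. u (Suc n) x) \<longlonglongrightarrow> (SUP n. u n x)" using lim[of x] by (rule LIMSEQ_Suc)
  then have "(\<lambda>n. Op (u n) x) \<longlonglongrightarrow> (SUP n. u n x)" using stp by simp
  moreover have "(\<lambda>n. Op (u n) x) \<longlonglongrightarrow> Op (\<lambda>y. SUP n. u n y) x" using cont lim by blast
  ultimately show ?thesis using LIMSEQ_unique by blast
qed

lemma tendsto_Min_img:
  fixes f :: "nat \<Rightarrow> 'w \<Rightarrow> real"
  assumes "finite S" "S \<noteq> {}" "\<And>y. y \<in> S \<Longrightarrow> (\<lambda>n. f n y) \<longlonglongrightarrow> L y"
  shows "(\<lambda>n. Min ((f n) ` S)) \<longlonglongrightarrow> Min (L ` S)"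
  using assms
proof (induction S rule: finite_ne_induct)
  case (singleton x)
  then show ?case by simp
next
  case (insert x F)
  have "(\<lambda>n. min (f n x) (Min ((f n) ` F))) \<longlonglongrightarrow> min (L x) (Min (L ` F))"
    using insert by (intro tendsto_min) auto
  then show ?case using insert by simp
qed


lemma gwf_prob_pos: "gwf K \<Longrightarrow> x \<in> Vrand K \<Longrightarrow> y \<in> outn K x \<Longrightarrow> 0 < prob K x y"
  using gwf_rand by blast

lemma gwf_prob_nonneg: "gwf K \<Longrightarrow> x \<in> Vrand K \<Longrightarrow> y \<in> outn K x \<Longrightarrow> 0 \<le> prob K x y"
  using gwf_prob_pos by (metis less_imp_le)

lemma gwf_prob_sum: "gwf K \<Longrightarrow> x \<in> Vrand K \<Longrightarrow> (\<Sum>y \<in> outn K x. prob K x y) = 1"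
  using gwf_rand by blast

lemma gwf_sink: "gwf K \<Longrightarrow> x \<in> Vsink K \<Longrightarrow> x \<notin> Vmax K \<and> x \<notin> Vmin K \<and> x \<notin> Vrand K \<and> 0 \<le> sval K x \<and> sval K x \<le> 1"
  using gwf_d3[of K] gwf_d5[of K] gwf_d6[of K] gwf_sval[of K] by blast

lemma next_exp_mono:
  assumes "gwf K" "\<And>y. f y \<le> g y"
  shows "next_exp K \<sigma> \<tau> f x \<le> next_exp K \<sigma> \<tau> g x"
  using assms gwf_prob_nonneg[OF assms(1)]
  by (auto simp: next_exp_def intro!: sum_mono mult_left_mono)

lemma mexp_mono:
  assumes "gwf K" "\<And>y. f y \<le> g y"
  shows "mexp K \<sigma> f x \<le> mexp K \<sigma> g x"
proof -
  have "Min (f ` outn K x) \<le> Min (g ` outn K x)" if "x \<in> Vmin K"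
  proof -
    have fin: "finite (outn K x)" and ne: "outn K x \<noteq> {}"
      using wf_finite_outn[OF assms(1)] wf_Vmin_ne[OF assms(1) that] by auto
    show ?thesis
    proof (subst Min_le_iff)
      show "finite (f ` outn K x)" "f ` outn K x \<noteq> {}" using fin ne by auto
      obtain y where "y \<in> outn K x" "g y = Min (g ` outn K x)"
        using fin ne by (metis (mono_tags, lifting) Min_in finite_imageI image_iff image_is_empty)
      then show "\<exists>a\<in>f ` outn K x. a \<le> Min (g ` outn K x)" using assms(2)[of y] by (intro bexI[of _ "f y"]) auto
    qed
  qed
  note mm = this
  show ?thesis
  proof (cases "x \<in> Vmax K")
    case True then show ?thesis using assms by (simp add: mexp_def)
  next
    case F1: False
    show ?thesis
    proof (cases "x \<in> Vmin K")
      case True then show ?thesis using F1 mm by (simp add: mexp_def)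
    next
      case False then show ?thesis using F1 assms gwf_prob_nonneg[OF assms(1)]
        by (auto simp: mexp_def intro!: sum_mono mult_left_mono)
    qed
  qed
qed

lemma next_exp_cong:
  assumes "\<And>y. y \<in> csucc K \<sigma> \<tau> x \<Longrightarrow> f y = g y"
  shows "next_exp K \<sigma> \<tau> f x = next_exp K \<sigma> \<tau> g x"
  using assms by (auto simp: next_exp_def csucc_def intro!: sum.cong)

lemma next_exp_diff:
  "next_exp K \<sigma> \<tau> (\<lambda>y. f y - g y) x = next_exp K \<sigma> \<tau> f x - next_exp K \<sigma> \<tau> g x"
  by (auto simp: next_exp_def right_diff_distrib sum_subtractf)

lemma sum_prob_bounds:
  assumes "gwf K" "x \<in> Vrand K" "\<And>y. 0 \<le> f y \<and> f y \<le> 1"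
  shows "0 \<le> (\<Sum>y \<in> outn K x. prob K x y * f y) \<and> (\<Sum>y \<in> outn K x. prob K x y * f y) \<le> 1"
proof
  show "0 \<le> (\<Sum>y \<in> outn K x. prob K x y * f y)"
    using assms gwf_prob_nonneg[OF assms(1,2)] by (auto intro!: sum_nonneg)
  have "(\<Sum>y \<in> outn K x. prob K x y * f y) \<le> (\<Sum>y \<in> outn K x. prob K x y * 1)"
    using assms gwf_prob_nonneg[OF assms(1,2)] by (auto intro!: sum_mono mult_left_le)
  then show "(\<Sum>y \<in> outn K x. prob K x y * f y) \<le> 1" using gwf_prob_sum[OF assms(1,2)] by simp
qed

lemma next_exp_bounds:
  assumes "gwf K" "\<And>y. 0 \<le> f y \<and> f y \<le> 1"
  shows "0 \<le> next_exp K \<sigma> \<tau> f x \<and> next_exp K \<sigma> \<tau> f x \<le> 1"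
  using assms sum_prob_bounds[OF assms(1) _ assms(2)] by (auto simp: next_exp_def)

lemma mexp_bounds:
  assumes "gwf K" "\<And>y. 0 \<le> f y \<and> f y \<le> 1"
  shows "0 \<le> mexp K \<sigma> f x \<and> mexp K \<sigma> f x \<le> 1"
proof -
  have "0 \<le> Min (f ` outn K x) \<and> Min (f ` outn K x) \<le> 1" if "x \<in> Vmin K"
  proof -
    have fin: "finite (outn K x)" and ne: "outn K x \<noteq> {}"
      using wf_finite_outn[OF assms(1)] wf_Vmin_ne[OF assms(1) that] by auto
    obtain y where "y \<in> outn K x" "f y = Min (f ` outn K x)"
      using fin ne by (metis (mono_tags, lifting) Min_in finite_imageI image_iff image_is_empty)
    then show ?thesis using assms(2)[of y] by simp
  qed
  note mm = this
  show ?thesis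
  proof (cases "x \<in> Vmax K")
    case True then show ?thesis using assms by (simp add: mexp_def)
  next
    case F1: False
    show ?thesis
    proof (cases "x \<in> Vmin K")
      case True then show ?thesis using F1 mm by (simp add: mexp_def)
    next
      case False then show ?thesis using F1 assms sum_prob_bounds[OF assms(1) _ assms(2)]
        by (auto simp: mexp_def)
    qed
  qed
qed

lemma h0_bounds: "gwf K \<Longrightarrow> 0 \<le> h0 K x \<and> h0 K x \<le> 1"
  using gwf_sink[of K x] by (auto simp: h0_def)

lemma hval_bounds: "gwf K \<Longrightarrow> 0 \<le> hval K \<sigma> \<tau> n x \<and> hval K \<sigma> \<tau> n x \<le> 1"
proof (induction n arbitrary: x)
  case 0 then show ?case using gwf_sink[of K x] by (auto simp: h0_def)
next
  case (Suc n) then show ?case using next_exp_bounds[of K "hval K \<sigma> \<tau> n"] by simp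
qed

lemma miter_bounds: "gwf K \<Longrightarrow> 0 \<le> miter K \<sigma> n x \<and> miter K \<sigma> n x \<le> 1"
proof (induction n arbitrary: x)
  case 0 then show ?case using gwf_sink[of K x] by (auto simp: h0_def)
next
  case (Suc n) then show ?case using mexp_bounds[of K "miter K \<sigma> n"] by simp
qed

lemma hval_inc: "gwf K \<Longrightarrow> hval K \<sigma> \<tau> n x \<le> hval K \<sigma> \<tau> (Suc n) x"
proof (induction n arbitrary: x)
  case 0
  show ?case
  proof (cases "x \<in> Vsink K")
    case True then show ?thesis using gwf_sink[OF 0 True] by (simp add: next_exp_def)
  next
    case False
    have "0 \<le> next_exp K \<sigma> \<tau> (hval K \<sigma> \<tau> 0) x"
      using next_exp_bounds[OF 0, of "hval K \<sigma> \<tau> 0"] hval_bounds[OF 0] by blast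
    then show ?thesis using False by simp
  qed
next
  case (Suc n)
  then show ?case using next_exp_mono[of K "hval K \<sigma> \<tau> n" "hval K \<sigma> \<tau> (Suc n)"] by simp
qed

lemma miter_inc: "gwf K \<Longrightarrow> miter K \<sigma> n x \<le> miter K \<sigma> (Suc n) x"
proof (induction n arbitrary: x)
  case 0
  show ?case
  proof (cases "x \<in> Vsink K")
    case True then show ?thesis using gwf_sink[OF 0 True] by (simp add: mexp_def)
  next
    case False
    have "0 \<le> mexp K \<sigma> (miter K \<sigma> 0) x"
      using mexp_bounds[OF 0, of "miter K \<sigma> 0"] miter_bounds[OF 0] by blast
    then show ?thesis using False by (simp add: h0_def)
  qed
next
  case (Suc n)
  then show ?case using mexp_mono[of K "miter K \<sigma> n" "miter K \<sigma> (Suc n)"] by simp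
qed

lemma pval_fix:
  assumes "gwf K"
  shows "next_exp K \<sigma> \<tau> (pval K \<sigma> \<tau>) x = pval K \<sigma> \<tau> x"
proof -
  have e: "pval K \<sigma> \<tau> = (\<lambda>y. SUP n. hval K \<sigma> \<tau> n y)" by (auto simp: pval_def)
  show ?thesis unfolding e
  proof (rule iter_fix[where B=1])
    show "hval K \<sigma> \<tau> n x \<le> hval K \<sigma> \<tau> (Suc n) x" for n x using hval_inc[OF assms] .
    show "hval K \<sigma> \<tau> n x \<le> 1" for n x using hval_bounds[OF assms] by blast
    show "hval K \<sigma> \<tau> (Suc n) = next_exp K \<sigma> \<tau> (hval K \<sigma> \<tau> n)" for n by auto
    fix x
    assume l: "\<And>y. (\<lambda>n. hval K \<sigma> \<tau> n y) \<longlonglongrightarrow> (SUP n. hval K \<sigma> \<tau> n y)"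
    show "(\<lambda>n. next_exp K \<sigma> \<tau> (hval K \<sigma> \<tau> n) x) \<longlonglongrightarrow> next_exp K \<sigma> \<tau> (\<lambda>y. SUP n. hval K \<sigma> \<tau> n y) x"
      unfolding next_exp_def using l by (auto intro!: tendsto_sum tendsto_mult_left)
  qed
qed

lemma lfpM_fix:
  assumes "gwf K"
  shows "mexp K \<sigma> (lfpM K \<sigma>) x = lfpM K \<sigma> x"
proof -
  have e: "lfpM K \<sigma> = (\<lambda>y. SUP n. miter K \<sigma> n y)" by (auto simp: lfpM_def)
  show ?thesis unfolding e
  proof (rule iter_fix[where B=1])
    show "miter K \<sigma> n x \<le> miter K \<sigma> (Suc n) x" for n x using miter_inc[OF assms] .
    show "miter K \<sigma> n x \<le> 1" for n x using miter_bounds[OF assms] by blast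
    show "miter K \<sigma> (Suc n) = mexp K \<sigma> (miter K \<sigma> n)" for n by auto
    fix x
    assume l: "\<And>y. (\<lambda>n. miter K \<sigma> n y) \<longlonglongrightarrow> (SUP n. miter K \<sigma> n y)"
    have "(\<lambda>n. Min (miter K \<sigma> n ` outn K x)) \<longlonglongrightarrow> Min ((\<lambda>y. SUP n. miter K \<sigma> n y) ` outn K x)"
      if "x \<in> Vmin K"
      using tendsto_Min_img[OF wf_finite_outn[OF assms] wf_Vmin_ne[OF assms that] l] .
    then show "(\<lambda>n. mexp K \<sigma> (miter K \<sigma> n) x) \<longlonglongrightarrow> mexp K \<sigma> (\<lambda>y. SUP n. miter K \<sigma> n y) x"
      unfolding mexp_def using l by (auto intro!: tendsto_sum tendsto_mult_left)
  qed
qed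

lemma hval_le_pval: "gwf K \<Longrightarrow> hval K \<sigma> \<tau> n x \<le> pval K \<sigma> \<tau> x"
  unfolding pval_def
  by (rule cSUP_upper) (auto intro!: bdd_aboveI[of _ 1] dest: hval_bounds[of K \<sigma> \<tau> _ x])

lemma miter_le_lfpM: "gwf K \<Longrightarrow> miter K \<sigma> n x \<le> lfpM K \<sigma> x"
  unfolding lfpM_def
  by (rule cSUP_upper) (auto intro!: bdd_aboveI[of _ 1] dest: miter_bounds[of K \<sigma> _ x])

lemma pval_bounds: "gwf K \<Longrightarrow> 0 \<le> pval K \<sigma> \<tau> x \<and> pval K \<sigma> \<tau> x \<le> 1"
proof
  assume w: "gwf K"
  show "0 \<le> pval K \<sigma> \<tau> x" using hval_le_pval[OF w, of \<sigma> \<tau> 0 x] hval_bounds[OF w, of \<sigma> \<tau> 0 x] by linarith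
  show "pval K \<sigma> \<tau> x \<le> 1" unfolding pval_def by (rule cSUP_least) (use hval_bounds[OF w, THEN conjunct2] in auto)
qed

lemma lfpM_bounds: "gwf K \<Longrightarrow> 0 \<le> lfpM K \<sigma> x \<and> lfpM K \<sigma> x \<le> 1"
proof
  assume w: "gwf K"
  show "0 \<le> lfpM K \<sigma> x" using miter_le_lfpM[OF w, of \<sigma> 0 x] miter_bounds[OF w, of \<sigma> 0 x] by linarith
  show "lfpM K \<sigma> x \<le> 1" unfolding lfpM_def by (rule cSUP_least) (use miter_bounds[OF w, THEN conjunct2] in auto)
qed

lemma pval_least:
  assumes w: "gwf K" and h: "\<And>x. h0 K x \<le> g x" and s: "\<And>x. next_exp K \<sigma> \<tau> g x \<le> g x"
  shows "pval K \<sigma> \<tau> x \<le> g x"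
proof -
  have "hval K \<sigma> \<tau> n y \<le> g y" for n y
  proof (induction n arbitrary: y)
    case 0 then show ?case using h by (simp add: h0_def)
  next
    case (Suc n)
    then show ?case using next_exp_mono[OF w, of "hval K \<sigma> \<tau> n" g \<sigma> \<tau> y] s[of y] by simp
  qed
  then show ?thesis unfolding pval_def by (intro cSUP_least) auto
qed

lemma lfpM_least:
  assumes w: "gwf K" and h: "\<And>x. h0 K x \<le> g x" and s: "\<And>x. mexp K \<sigma> g x \<le> g x"
  shows "lfpM K \<sigma> x \<le> g x"
proof -
  have "miter K \<sigma> n y \<le> g y" for n y
  proof (induction n arbitrary: y)
    case 0 then show ?case using h by simp
  next
    case (Suc n)
    then show ?case using mexp_mono[OF w, of "miter K \<sigma> n" g \<sigma> y] s[of y] by simp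
  qed
  then show ?thesis unfolding lfpM_def by (intro cSUP_least) auto
qed

lemma h0_le_lfpM: "gwf K \<Longrightarrow> h0 K x \<le> lfpM K \<sigma> x"
  using miter_le_lfpM[of K \<sigma> 0 x] by simp

lemma h0_le_pval: "gwf K \<Longrightarrow> h0 K x \<le> pval K \<sigma> \<tau> x"
  using hval_le_pval[of K \<sigma> \<tau> 0 x] by (simp add: h0_def)

lemma pval_sink:
  assumes w: "gwf K" and s: "x \<in> Vsink K"
  shows "pval K \<sigma> \<tau> x = sval K x"
proof -
  have "hval K \<sigma> \<tau> n x = sval K x" for n
    by (induction n) (use gwf_sink[OF w s] s in \<open>auto simp: next_exp_def\<close>)
  then show ?thesis unfolding pval_def by simp
qed

lemma pval_closed:
  assumes c: "closedS K \<sigma> \<tau> S" and d: "S \<inter> Vsink K = {}" and x: "x \<in> S"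
  shows "pval K \<sigma> \<tau> x = 0"
proof -
  have "\<forall>y\<in>S. hval K \<sigma> \<tau> n y = 0" for n
  proof (induction n)
    case 0 then show ?case using d by auto
  next
    case (Suc n)
    show ?case
    proof
      fix y assume y: "y \<in> S"
      have "next_exp K \<sigma> \<tau> (hval K \<sigma> \<tau> n) y = next_exp K \<sigma> \<tau> (\<lambda>_. 0) y"
        using Suc c y unfolding closedS_def by (intro next_exp_cong) auto
      then show "hval K \<sigma> \<tau> (Suc n) y = 0" by (simp add: next_exp_def)
    qed
  qed
  then show ?thesis using x unfolding pval_def by simp
qed



lemma csucc_verts:
  assumes w: "gwf K" and ms: "max_strat K \<sigma>" and mt: "min_strat K \<tau>" and x: "x \<in> verts K"
  shows "csucc K \<sigma> \<tau> x \<subseteq> verts K"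
proof -
  have "(x, \<sigma> x) \<in> arcs K" if "x \<in> Vmax K" using ms that unfolding max_strat_def by blast
  moreover have "(x, \<tau> x) \<in> arcs K" if "x \<in> Vmin K" using mt that unfolding min_strat_def by blast
  ultimately show ?thesis using x wf_outn_verts[OF w] unfolding csucc_def outn_def by auto
qed

lemma mp1:
  assumes w: "gwf K" and le: "\<And>y. y \<in> csucc K \<sigma> \<tau> x \<Longrightarrow> f y \<le> m"
    and ge: "m \<le> next_exp K \<sigma> \<tau> f x" and y: "y \<in> csucc K \<sigma> \<tau> x"
  shows "f y = m"
proof (cases "x \<in> Vmax K \<or> x \<in> Vmin K \<or> x \<notin> Vrand K")
  case True
  then show ?thesis using le ge y by (auto simp: csucc_def next_exp_def split: if_splits)
next
  case False
  then have xr: "x \<in> Vrand K" and nm: "x \<notin> Vmax K" "x \<notin> Vmin K" by auto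
  have cs: "csucc K \<sigma> \<tau> x = outn K x" using xr nm by (simp add: csucc_def)
  have fin: "finite (outn K x)" using wf_finite_outn[OF w] .
  have e: "(\<Sum>z \<in> outn K x. prob K x z * m) = m"
    using gwf_prob_sum[OF w xr] by (simp add: sum_distrib_right[symmetric])
  have "m \<le> (\<Sum>z \<in> outn K x. prob K x z * f z)" using ge xr nm by (simp add: next_exp_def)
  then have "(\<Sum>z \<in> outn K x. prob K x z * m) \<le> (\<Sum>z \<in> outn K x. prob K x z * f z)" using e by simp
  then have "(\<Sum>z \<in> outn K x. prob K x z * (m - f z)) \<le> 0"
    by (simp add: right_diff_distrib sum_subtractf)
  moreover have nn: "\<And>z. z \<in> outn K x \<Longrightarrow> 0 \<le> prob K x z * (m - f z)"
    using le cs gwf_prob_nonneg[OF w xr] by auto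
  ultimately have "(\<Sum>z \<in> outn K x. prob K x z * (m - f z)) = 0"
    by (meson antisym sum_nonneg)
  then have "\<forall>z \<in> outn K x. prob K x z * (m - f z) = 0"
    using sum_nonneg_eq_0_iff[OF fin, of "\<lambda>z. prob K x z * (m - f z)"] nn by blast
  then show ?thesis using y cs gwf_prob_pos[OF w xr] by force
qed

lemma max_principle:
  assumes w: "gwf K" and ms: "max_strat K \<sigma>" and mt: "min_strat K \<tau>"
    and le: "\<And>x. x \<in> verts K \<Longrightarrow> g x \<le> next_exp K \<sigma> \<tau> g x"
    and sk: "\<And>s. s \<in> Vsink K \<Longrightarrow> g s \<le> sval K s"
    and cl: "\<And>S m. S \<subseteq> verts K - Vsink K \<Longrightarrow> S \<noteq> {} \<Longrightarrow> closedS K \<sigma> \<tau> S \<Longrightarrow>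
               (\<And>x. x \<in> S \<Longrightarrow> g x = m) \<Longrightarrow> m \<le> 0"
    and x0: "x0 \<in> verts K"
  shows "g x0 \<le> pval K \<sigma> \<tau> x0"
proof (rule ccontr)
  assume "\<not> g x0 \<le> pval K \<sigma> \<tau> x0"
  define d where "d = (\<lambda>x. g x - pval K \<sigma> \<tau> x)"
  define M where "M = Max (d ` verts K)"
  have fin: "finite (verts K)" using gwf_fin[OF w] .
  have dM: "d x \<le> M" if "x \<in> verts K" for x unfolding M_def using fin that by auto
  have Mpos: "M > 0" using dM[OF x0] \<open>\<not> g x0 \<le> pval K \<sigma> \<tau> x0\<close> unfolding d_def by linarith
  define S where "S = {x \<in> verts K. d x = M}"
  have Sne: "S \<noteq> {}"
  proof -
    have "M \<in> d ` verts K" unfolding M_def using fin x0 by (intro Max_in) auto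
    then show ?thesis unfolding S_def by auto
  qed
  have Ssink: "S \<inter> Vsink K = {}"
  proof -
    have "d s \<le> 0" if "s \<in> Vsink K" for s using sk[OF that] pval_sink[OF w that, of \<sigma> \<tau>] unfolding d_def by simp
    then show ?thesis unfolding S_def using Mpos by force
  qed
  have dle: "d x \<le> next_exp K \<sigma> \<tau> d x" if "x \<in> verts K" for x
    using le[OF that] pval_fix[OF w, of \<sigma> \<tau> x] unfolding d_def next_exp_diff by simp
  have clo: "closedS K \<sigma> \<tau> S"
    unfolding closedS_def
  proof (intro ballI subsetI)
    fix x y assume xS: "x \<in> S" and y: "y \<in> csucc K \<sigma> \<tau> x"
    have xv: "x \<in> verts K" and dx: "d x = M" using xS unfolding S_def by auto
    have cv: "csucc K \<sigma> \<tau> x \<subseteq> verts K" using csucc_verts[OF w ms mt xv] .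
    have "d y = M"
      by (rule mp1[OF w _ _ y]) (use dM cv dle[OF xv] dx in auto)
    then show "y \<in> S" using cv y unfolding S_def by auto
  qed
  have "g x = M" if "x \<in> S" for x
    using pval_closed[OF clo Ssink that] that unfolding S_def d_def by auto
  then have "M \<le> 0" using cl[of S M] Ssink Sne clo unfolding S_def by blast
  then show False using Mpos by simp
qed

definition greedy :: "('w, 'b) ssg_scheme \<Rightarrow> ('w \<Rightarrow> real) \<Rightarrow> 'w \<Rightarrow> 'w" where
  "greedy K f x = (SOME y. y \<in> outn K x \<and> (\<forall>z \<in> outn K x. f y \<le> f z))"

lemma greedy:
  assumes w: "gwf K" and x: "x \<in> Vmin K"
  shows "greedy K f x \<in> outn K x" "f (greedy K f x) = Min (f ` outn K x)"
proof -
  have fin: "finite (outn K x)" and ne: "outn K x \<noteq> {}"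
    using wf_finite_outn[OF w] wf_Vmin_ne[OF w x] by auto
  obtain y where y: "y \<in> outn K x" "f y = Min (f ` outn K x)"
    using fin ne by (metis (mono_tags, lifting) Min_in finite_imageI image_iff image_is_empty)
  then have "y \<in> outn K x \<and> (\<forall>z \<in> outn K x. f y \<le> f z)" using fin by auto
  then have g: "greedy K f x \<in> outn K x \<and> (\<forall>z \<in> outn K x. f (greedy K f x) \<le> f z)"
    unfolding greedy_def by (rule someI)
  then show "greedy K f x \<in> outn K x" by blast
  show "f (greedy K f x) = Min (f ` outn K x)"
    using g fin ne by (intro antisym) (auto intro: Min.coboundedI Min.boundedI)
qed

lemma lfpM_le_pval:
  assumes w: "gwf K" and mt: "min_strat K \<tau>"
  shows "lfpM K \<sigma> x \<le> pval K \<sigma> \<tau> x"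
proof (rule lfpM_least[OF w])
  show "h0 K y \<le> pval K \<sigma> \<tau> y" for y using h0_le_pval[OF w] .
  fix y
  have "mexp K \<sigma> (pval K \<sigma> \<tau>) y \<le> next_exp K \<sigma> \<tau> (pval K \<sigma> \<tau>) y"
  proof -
    have "Min (pval K \<sigma> \<tau> ` outn K y) \<le> pval K \<sigma> \<tau> (\<tau> y)" if "y \<in> Vmin K"
    proof -
      have "\<tau> y \<in> outn K y" using mt that unfolding min_strat_def outn_def by auto
      then show ?thesis using wf_finite_outn[OF w] by (auto intro: Min.coboundedI)
    qed
    then show ?thesis unfolding mexp_def next_exp_def by simp
  qed
  then show "mexp K \<sigma> (pval K \<sigma> \<tau>) y \<le> pval K \<sigma> \<tau> y" using pval_fix[OF w] by simp
qed

lemma pval_greedy_le: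
  assumes w: "gwf K"
  shows "pval K \<sigma> (greedy K (lfpM K \<sigma>)) x \<le> lfpM K \<sigma> x"
proof (rule pval_least[OF w])
  show "h0 K y \<le> lfpM K \<sigma> y" for y using h0_le_lfpM[OF w] .
  fix y
  have "next_exp K \<sigma> (greedy K (lfpM K \<sigma>)) (lfpM K \<sigma>) y = mexp K \<sigma> (lfpM K \<sigma>) y"
    using greedy(2)[OF w, of y "lfpM K \<sigma>"] unfolding mexp_def next_exp_def by simp
  then show "next_exp K \<sigma> (greedy K (lfpM K \<sigma>)) (lfpM K \<sigma>) y \<le> lfpM K \<sigma> y"
    using lfpM_fix[OF w] by simp
qed

lemma br_best:
  assumes w: "gwf K"
  shows "best_resp_min K \<sigma> (br K \<sigma>)"
proof -
  have "best_resp_min K \<sigma> (greedy K (lfpM K \<sigma>))"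
    unfolding best_resp_min_def
  proof (intro conjI allI impI ballI)
    show "min_strat K (greedy K (lfpM K \<sigma>))"
      unfolding min_strat_def using greedy(1)[OF w] unfolding outn_def by blast
    fix \<tau>' x assume "min_strat K \<tau>'" "x \<in> verts K"
    then show "pval K \<sigma> (greedy K (lfpM K \<sigma>)) x \<le> pval K \<sigma> \<tau>' x"
      using pval_greedy_le[OF w] lfpM_le_pval[OF w] order_trans by blast
  qed
  then show ?thesis unfolding br_def by (metis someI)
qed

lemma br_min_strat: "gwf K \<Longrightarrow> min_strat K (br K \<sigma>)"
  using br_best unfolding best_resp_min_def by blast

lemma vmax_lfpM:
  assumes w: "gwf K" and x: "x \<in> verts K"
  shows "vmax K \<sigma> x = lfpM K \<sigma> x"
proof (rule antisym)
  have gm: "min_strat K (greedy K (lfpM K \<sigma>))"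
    unfolding min_strat_def using greedy(1)[OF w] unfolding outn_def by blast
  have "vmax K \<sigma> x \<le> pval K \<sigma> (greedy K (lfpM K \<sigma>)) x"
    using br_best[OF w, of \<sigma>] gm x unfolding best_resp_min_def vmax_def by blast
  then show "vmax K \<sigma> x \<le> lfpM K \<sigma> x" using pval_greedy_le[OF w] order_trans by blast
  show "lfpM K \<sigma> x \<le> vmax K \<sigma> x"
    unfolding vmax_def using lfpM_le_pval[OF w br_min_strat[OF w]] .
qed

lemma vmax_fix: "gwf K \<Longrightarrow> next_exp K \<sigma> (br K \<sigma>) (vmax K \<sigma>) x = vmax K \<sigma> x"
  unfolding vmax_def by (rule pval_fix)

lemma vmax_bounds: "gwf K \<Longrightarrow> 0 \<le> vmax K \<sigma> x \<and> vmax K \<sigma> x \<le> 1"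
  unfolding vmax_def by (rule pval_bounds)

lemma vmax_sink: "gwf K \<Longrightarrow> s \<in> Vsink K \<Longrightarrow> vmax K \<sigma> s = sval K s"
  unfolding vmax_def by (rule pval_sink)

lemma h0_le_vmax: "gwf K \<Longrightarrow> h0 K x \<le> vmax K \<sigma> x"
  unfolding vmax_def by (rule h0_le_pval)

lemma vmax_le_resp:
  assumes w: "gwf K" and mt: "min_strat K \<tau>" and x: "x \<in> verts K"
  shows "vmax K \<sigma> x \<le> pval K \<sigma> \<tau> x"
  using br_best[OF w, of \<sigma>] mt x unfolding best_resp_min_def vmax_def by blast

lemma vmax_min:
  assumes w: "gwf K" and x: "x \<in> Vmin K" and y: "y \<in> outn K x"
  shows "vmax K \<sigma> x \<le> vmax K \<sigma> y"
proof -
  have xv: "x \<in> verts K" and yv: "y \<in> verts K" using wf_outn_verts[OF w y] by auto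
  have nx: "x \<notin> Vmax K" using gwf_d1[OF w] x by blast
  have "lfpM K \<sigma> x = Min (lfpM K \<sigma> ` outn K x)"
    using lfpM_fix[OF w, of \<sigma> x] x nx unfolding mexp_def by simp
  also have "\<dots> \<le> lfpM K \<sigma> y" using y wf_finite_outn[OF w] by (auto intro: Min.coboundedI)
  finally show ?thesis using vmax_lfpM[OF w xv] vmax_lfpM[OF w yv] by simp
qed

lemma next_exp_indep_min: "x \<notin> Vmin K \<Longrightarrow> next_exp K \<sigma> \<tau>1 f x = next_exp K \<sigma> \<tau>2 f x"
  by (simp add: next_exp_def)

lemma next_exp_indep_max: "x \<notin> Vmax K \<Longrightarrow> next_exp K \<sigma>1 \<tau> f x = next_exp K \<sigma>2 \<tau> f x"
  by (simp add: next_exp_def)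

lemma vmax_le_next:
  assumes w: "gwf K" and mt: "min_strat K \<tau>" and x: "x \<in> verts K"
  shows "vmax K \<sigma> x \<le> next_exp K \<sigma> \<tau> (vmax K \<sigma>) x"
proof (cases "x \<in> Vmin K")
  case True
  then have nx: "x \<notin> Vmax K" using gwf_d1[OF w] by blast
  have "\<tau> x \<in> outn K x" using mt True unfolding min_strat_def outn_def by auto
  then show ?thesis using vmax_min[OF w True] True nx by (simp add: next_exp_def)
next
  case False
  then show ?thesis using vmax_fix[OF w, of \<sigma> x] next_exp_indep_min[OF False] by (metis order_refl)
qed

lemma improve_generic:
  assumes w: "gwf K" and ms: "max_strat K \<sigma>" and ms': "max_strat K \<sigma>'"
    and hyp: "\<And>x. x \<in> Vmax K \<Longrightarrow> \<sigma>' x = \<sigma> x \<or> vmax K \<sigma> (\<sigma>' x) > vmax K \<sigma> x"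
    and x0: "x0 \<in> verts K"
  shows "vmax K \<sigma> x0 \<le> vmax K \<sigma>' x0"
proof -
  let ?v = "vmax K \<sigma>"
  let ?t = "br K \<sigma>'"
  have mt: "min_strat K ?t" using br_min_strat[OF w] .
  have "?v x0 \<le> pval K \<sigma>' ?t x0"
  proof (rule max_principle[OF w ms' mt _ _ _ x0])
    fix x assume xv: "x \<in> verts K"
    show "?v x \<le> next_exp K \<sigma>' ?t ?v x"
    proof (cases "x \<in> Vmax K")
      case True
      have "?v x = ?v (\<sigma> x)" using vmax_fix[OF w, of \<sigma> x] True by (simp add: next_exp_def)
      then show ?thesis using hyp[OF True] True by (auto simp: next_exp_def)
    next
      case False
      then show ?thesis using vmax_le_next[OF w mt xv, of \<sigma>] next_exp_indep_max[OF False] by metis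
    qed
  next
    fix s assume "s \<in> Vsink K" then show "?v s \<le> sval K s" using vmax_sink[OF w] by simp
  next
    fix S m assume S: "S \<subseteq> verts K - Vsink K" "S \<noteq> {}" "closedS K \<sigma>' ?t S"
      and gm: "\<And>x. x \<in> S \<Longrightarrow> ?v x = m"
    have eq: "\<sigma>' x = \<sigma> x" if "x \<in> S" "x \<in> Vmax K" for x
    proof -
      have "\<sigma>' x \<in> S" using S(3) that unfolding closedS_def csucc_def by auto
      then show ?thesis using hyp[OF that(2)] gm that(1) by fastforce
    qed
    have clo: "closedS K \<sigma> ?t S"
      unfolding closedS_def
    proof
      fix x assume xS: "x \<in> S"
      have "csucc K \<sigma> ?t x = csucc K \<sigma>' ?t x" using eq[OF xS] by (simp add: csucc_def)
      then show "csucc K \<sigma> ?t x \<subseteq> S" using S(3) xS unfolding closedS_def by simp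
    qed
    obtain x where x: "x \<in> S" using S(2) by blast
    have "m = ?v x" using gm[OF x] by simp
    also have "\<dots> \<le> pval K \<sigma> ?t x" using vmax_le_resp[OF w mt] x S(1) by blast
    also have "\<dots> = 0" using pval_closed[OF clo _ x] S(1) by blast
    finally show "m \<le> 0" .
  qed
  then show ?thesis unfolding vmax_def .
qed

lemma improve_generic_strict:
  assumes w: "gwf K" and ms': "max_strat K \<sigma>'" and x: "x \<in> Vmax K"
    and lt: "vmax K \<sigma> (\<sigma>' x) > vmax K \<sigma> x"
    and le: "\<And>y. y \<in> verts K \<Longrightarrow> vmax K \<sigma> y \<le> vmax K \<sigma>' y"
  shows "vmax K \<sigma> x < vmax K \<sigma>' x"
proof -
  have a: "(x, \<sigma>' x) \<in> arcs K" using ms' x unfolding max_strat_def by blast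
  then have "\<sigma>' x \<in> verts K" using gwf_arcs[OF w] by blast
  moreover have "vmax K \<sigma>' x = vmax K \<sigma>' (\<sigma>' x)"
    using vmax_fix[OF w, of \<sigma>' x] x by (simp add: next_exp_def)
  ultimately show ?thesis using le lt by force
qed

lemma opt_if_no_switch:
  assumes w: "gwf K" and ms: "max_strat K \<sigma>"
    and ns: "\<And>x y. x \<in> Vmax K \<Longrightarrow> y \<in> outn K x \<Longrightarrow> vmax K \<sigma> y \<le> vmax K \<sigma> x"
  shows "optimal_pair K \<sigma> (br K \<sigma>)"
proof -
  let ?t = "br K \<sigma>"
  let ?v = "vmax K \<sigma>"
  have mt: "min_strat K ?t" using br_min_strat[OF w] .
  have up: "pval K \<sigma>' ?t x \<le> ?v x" if "max_strat K \<sigma>'" for \<sigma>' x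
  proof (rule pval_least[OF w])
    show "h0 K y \<le> ?v y" for y using h0_le_vmax[OF w] .
    fix y
    show "next_exp K \<sigma>' ?t ?v y \<le> ?v y"
    proof (cases "y \<in> Vmax K")
      case True
      have "\<sigma>' y \<in> outn K y" using that True unfolding max_strat_def outn_def by auto
      then show ?thesis using ns[OF True] True by (simp add: next_exp_def)
    next
      case False
      then show ?thesis using vmax_fix[OF w, of \<sigma> y] next_exp_indep_max[OF False] by (metis order_refl)
    qed
  qed
  have brm: "best_resp_max K ?t \<sigma>"
    unfolding best_resp_max_def using ms up unfolding vmax_def by blast
  define ss where "ss = (SOME \<sigma>. best_resp_max K ?t \<sigma>)"
  have bss: "best_resp_max K ?t ss" unfolding ss_def using brm by (metis someI)
  have "vmin K ?t x = ?v x" if "x \<in> verts K" for x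
  proof (rule antisym)
    have "max_strat K ss" using bss unfolding best_resp_max_def by blast
    then show "vmin K ?t x \<le> ?v x" unfolding vmin_def ss_def[symmetric] using up by blast
    show "?v x \<le> vmin K ?t x"
      unfolding vmin_def ss_def[symmetric] vmax_def using bss ms that unfolding best_resp_max_def by blast
  qed
  then show ?thesis unfolding optimal_pair_def using ms mt by (simp add: vmax_def)
qed



lemma mexp_cong_verts:
  assumes w: "gwf K" and ms: "max_strat K \<sigma>" and x: "x \<in> verts K"
    and eq: "\<And>z. z \<in> verts K \<Longrightarrow> f z = g z"
  shows "mexp K \<sigma> f x = mexp K \<sigma> g x"
proof -
  have "\<sigma> x \<in> verts K" if "x \<in> Vmax K"
    using ms that gwf_arcs[OF w] unfolding max_strat_def by blast
  moreover have "f ` outn K x = g ` outn K x" using eq wf_outn_verts[OF w] by (auto intro!: image_cong)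
  moreover have "(\<Sum>y \<in> outn K x. prob K x y * f y) = (\<Sum>y \<in> outn K x. prob K x y * g y)"
    using eq wf_outn_verts[OF w] by (auto intro!: sum.cong)
  ultimately show ?thesis using eq x unfolding mexp_def by auto
qed

lemma vmax_mexp_fix:
  assumes w: "gwf K" and ms: "max_strat K \<sigma>" and x: "x \<in> verts K"
  shows "mexp K \<sigma> (vmax K \<sigma>) x = vmax K \<sigma> x"
  using mexp_cong_verts[OF w ms x, of "vmax K \<sigma>" "lfpM K \<sigma>"] vmax_lfpM[OF w] lfpM_fix[OF w] x by simp

definition hsucc :: "('v, 'a) ssg_scheme \<Rightarrow> ('v \<times> 'v) set \<Rightarrow> 'v \<Rightarrow> 'v \<Rightarrow> 'v + 'v \<times> 'v" where
  "hsucc G A x y = (if (x, y) \<in> repl G A then Inr (x, y) else Inl y)"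

lemma hsucc_inj: "hsucc G A x y = hsucc G A x y' \<Longrightarrow> y = y'"
  unfolding hsucc_def by (auto split: if_splits)

lemma inj_hsucc: "inj_on (hsucc G A x) S"
  by (auto intro: inj_onI hsucc_inj)

lemma repl_arcs: "e \<in> repl G A \<Longrightarrow> e \<in> arcs G"
  unfolding repl_def by auto

lemma repl_nsink: "(x, y) \<in> repl G A \<Longrightarrow> x \<notin> Vsink G"
  unfolding repl_def by auto

lemma T_simps:
  "Vmax (transf G A \<sigma>) = Inl ` Vmax G"
  "Vmin (transf G A \<sigma>) = Inl ` Vmin G"
  "Vrand (transf G A \<sigma>) = Inl ` Vrand G"
  "Vsink (transf G A \<sigma>) = Inl ` Vsink G \<union> Inr ` repl G A"
  "sval (transf G A \<sigma>) (Inl x) = sval G x"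
  "sval (transf G A \<sigma>) (Inr (x, y)) = vmax G \<sigma> y"
  by (simp_all add: transf_def)

lemma T_prob0: "prob (transf G A \<sigma>) = (\<lambda>a b. case (a, b) of
               (Inl x, Inl y) \<Rightarrow> prob G x y
             | (Inl x, Inr (x', y)) \<Rightarrow> (if x' = x then prob G x y else 0)
             | _ \<Rightarrow> 0)"
  by (simp add: transf_def)

lemma T_prob: "prob (transf G A \<sigma>) (Inl x) (hsucc G A x y) = prob G x y"
  unfolding T_prob0 hsucc_def by simp

lemma T_arcs: "arcs (transf G A \<sigma>) = {(Inl x, Inl y) | x y. (x, y) \<in> arcs G - repl G A}
          \<union> {(Inl x, Inr (x, y)) | x y. (x, y) \<in> repl G A}
          \<union> {(Inr e, Inr e) | e. e \<in> repl G A}"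
  by (simp add: transf_def)

lemma T_arc_Inl: "(Inl x, b) \<in> arcs (transf G A \<sigma>) \<longleftrightarrow> (\<exists>y. (x, y) \<in> arcs G \<and> b = hsucc G A x y)"
proof (cases b)
  case (Inl y)
  then show ?thesis unfolding T_arcs hsucc_def by auto
next
  case (Inr e)
  obtain x' y where e: "e = (x', y)" by (cases e)
  have l: "(Inl x, Inr (x', y)) \<in> arcs (transf G A \<sigma>) \<longleftrightarrow> x' = x \<and> (x, y) \<in> repl G A"
    unfolding T_arcs by auto
  show ?thesis unfolding Inr e l
  proof
    assume a: "x' = x \<and> (x, y) \<in> repl G A"
    then show "\<exists>y'. (x, y') \<in> arcs G \<and> Inr (x', y) = hsucc G A x y'"
      using repl_arcs by (intro exI[of _ y]) (auto simp: hsucc_def)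
  next
    assume "\<exists>y'. (x, y') \<in> arcs G \<and> Inr (x', y) = hsucc G A x y'"
    then obtain y' where "(x, y') \<in> arcs G" "Inr (x', y) = hsucc G A x y'" by blast
    then show "x' = x \<and> (x, y) \<in> repl G A" by (auto simp: hsucc_def split: if_splits)
  qed
qed

lemma T_mem:
  "Inl x \<in> Vmax (transf G A \<sigma>) \<longleftrightarrow> x \<in> Vmax G"
  "Inl x \<in> Vmin (transf G A \<sigma>) \<longleftrightarrow> x \<in> Vmin G"
  "Inl x \<in> Vrand (transf G A \<sigma>) \<longleftrightarrow> x \<in> Vrand G"
  "Inl x \<in> Vsink (transf G A \<sigma>) \<longleftrightarrow> x \<in> Vsink G"
  "Inr e \<notin> Vmax (transf G A \<sigma>)"
  "Inr e \<notin> Vmin (transf G A \<sigma>)"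
  "Inr e \<notin> Vrand (transf G A \<sigma>)"
  "Inr e \<in> Vsink (transf G A \<sigma>) \<longleftrightarrow> e \<in> repl G A"
  unfolding T_simps by auto

lemma T_verts: "verts (transf G A \<sigma>) = Inl ` verts G \<union> Inr ` repl G A"
  unfolding verts_def T_simps by auto

lemma T_outn_Inl: "outn (transf G A \<sigma>) (Inl x) = hsucc G A x ` outn G x"
  unfolding outn_def T_arc_Inl by auto

lemma T_outn_Inr: "outn (transf G A \<sigma>) (Inr e) = (if e \<in> repl G A then {Inr e} else {})"
  unfolding outn_def T_arcs by (cases e) auto

lemma T_arc_iff: "(Inl x, hsucc G A x y) \<in> arcs (transf G A \<sigma>) \<longleftrightarrow> (x, y) \<in> arcs G"
proof -
  have "(Inl x, hsucc G A x y) \<in> arcs (transf G A \<sigma>) \<longleftrightarrow> hsucc G A x y \<in> outn (transf G A \<sigma>) (Inl x)"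
    unfolding outn_def by simp
  also have "\<dots> \<longleftrightarrow> y \<in> outn G x" unfolding T_outn_Inl by (auto dest: hsucc_inj)
  finally show ?thesis unfolding outn_def by simp
qed

lemma lift_Inl: "lift_strat G A \<sigma>' (Inl x) = hsucc G A x (\<sigma>' x)"
  unfolding lift_strat_def hsucc_def by simp

lemma lift_Inr: "lift_strat G A \<sigma>' (Inr e) = Inr e"
  unfolding lift_strat_def by simp

lemma hsucc_self:
  assumes w: "gwf G" and n: "x \<notin> Vmax G" "x \<notin> Vmin G" "x \<notin> Vrand G"
  shows "hsucc G A x x = Inl x"
proof -
  have "(x, x) \<notin> repl G A"
  proof
    assume r: "(x, x) \<in> repl G A"
    then have "x \<in> verts G" using repl_arcs[OF r] gwf_arcs[OF w] by blast
    then have "x \<in> Vsink G" using n unfolding verts_def by blast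
    then show False using repl_nsink[OF r] by blast
  qed
  then show ?thesis unfolding hsucc_def by simp
qed

lemma T_next:
  assumes w: "gwf G"
  shows "next_exp (transf G A \<sigma>) (lift_strat G A \<sigma>1) (lift_strat G A \<tau>1) f (Inl x)
       = next_exp G \<sigma>1 \<tau>1 (\<lambda>y. f (hsucc G A x y)) x"
proof -
  have s: "(\<Sum>b \<in> outn (transf G A \<sigma>) (Inl x). prob (transf G A \<sigma>) (Inl x) b * f b)
        = (\<Sum>y \<in> outn G x. prob G x y * f (hsucc G A x y))"
    unfolding T_outn_Inl by (simp add: sum.reindex[OF inj_hsucc] T_simps T_prob)
  show ?thesis using s hsucc_self[OF w] unfolding next_exp_def T_mem lift_Inl by auto
qed

lemma T_next_Inr: "next_exp (transf G A \<sigma>) s t f (Inr e) = f (Inr e)"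
  by (simp add: next_exp_def T_mem)

lemma T_csucc:
  assumes w: "gwf G"
  shows "csucc (transf G A \<sigma>) (lift_strat G A \<sigma>1) (lift_strat G A \<tau>1) (Inl x)
       = hsucc G A x ` csucc G \<sigma>1 \<tau>1 x"
  using hsucc_self[OF w] unfolding csucc_def T_mem lift_Inl T_outn_Inl by auto

lemma T_mexp:
  assumes w: "gwf G"
  shows "mexp (transf G A \<sigma>) (lift_strat G A \<sigma>1) f (Inl x) = mexp G \<sigma>1 (\<lambda>y. f (hsucc G A x y)) x"
proof -
  have s: "(\<Sum>b \<in> outn (transf G A \<sigma>) (Inl x). prob (transf G A \<sigma>) (Inl x) b * f b)
        = (\<Sum>y \<in> outn G x. prob G x y * f (hsucc G A x y))"
    unfolding T_outn_Inl by (simp add: sum.reindex[OF inj_hsucc] T_simps T_prob)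
  have m: "f ` outn (transf G A \<sigma>) (Inl x) = (\<lambda>y. f (hsucc G A x y)) ` outn G x"
    unfolding T_outn_Inl by (simp add: image_image)
  show ?thesis using s m hsucc_self[OF w] unfolding mexp_def T_mem lift_Inl by auto
qed

lemma T_h0_Inl: "h0 (transf G A \<sigma>) (Inl x) = h0 G x"
  unfolding h0_def T_simps by auto

lemma gwf_transf:
  assumes w: "gwf G"
  shows "gwf (transf G A \<sigma>)" (is "gwf ?H")
proof -
  have ra: "repl G A \<subseteq> verts G \<times> verts G" using repl_arcs gwf_arcs[OF w] by blast
  have f1: "finite (verts ?H)"
  proof -
    have "finite (repl G A)" using ra gwf_fin[OF w] by (meson finite_SigmaI finite_subset)
    then show ?thesis unfolding T_verts using gwf_fin[OF w] by simp
  qed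
  have d: "Vmax ?H \<inter> Vmin ?H = {}" "Vmax ?H \<inter> Vrand ?H = {}" "Vmax ?H \<inter> Vsink ?H = {}"
     "Vmin ?H \<inter> Vrand ?H = {}" "Vmin ?H \<inter> Vsink ?H = {}" "Vrand ?H \<inter> Vsink ?H = {}"
    unfolding T_simps using gwf_d1[OF w] gwf_d2[OF w] gwf_d3[OF w] gwf_d4[OF w] gwf_d5[OF w] gwf_d6[OF w]
    by blast+
  have ar: "arcs ?H \<subseteq> verts ?H \<times> verts ?H"
    unfolding T_verts T_arcs
    apply (intro Un_least subsetI)
    using gwf_arcs[OF w] ra by blast+
  have ne: "\<forall>b \<in> verts ?H - Vsink ?H. outn ?H b \<noteq> {}"
  proof
    fix b assume b: "b \<in> verts ?H - Vsink ?H"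
    then obtain x where x: "b = Inl x" "x \<in> verts G" "x \<notin> Vsink G"
      unfolding T_verts T_simps by auto
    then show "outn ?H b \<noteq> {}" unfolding x(1) T_outn_Inl using gwf_ne[OF w] x by auto
  qed
  have rd: "\<forall>b \<in> Vrand ?H. (\<forall>c \<in> outn ?H b. prob ?H b c > 0) \<and> (\<Sum>c \<in> outn ?H b. prob ?H b c) = 1"
  proof
    fix b assume b: "b \<in> Vrand ?H"
    then obtain x where x: "b = Inl x" "x \<in> Vrand G" unfolding T_simps by auto
    have "(\<Sum>c \<in> outn ?H b. prob ?H b c) = (\<Sum>y \<in> outn G x. prob G x y)"
      unfolding x T_outn_Inl by (simp add: sum.reindex[OF inj_hsucc] T_simps T_prob)
    then show "(\<forall>c \<in> outn ?H b. prob ?H b c > 0) \<and> (\<Sum>c \<in> outn ?H b. prob ?H b c) = 1"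
      using gwf_prob_pos[OF w x(2)] gwf_prob_sum[OF w x(2)] unfolding x T_outn_Inl
      by (auto simp: T_simps T_prob)
  qed
  have sv: "\<forall>s \<in> Vsink ?H. 0 \<le> sval ?H s \<and> sval ?H s \<le> 1"
  proof
    fix s assume "s \<in> Vsink ?H"
    then consider x where "s = Inl x" "x \<in> Vsink G" | x y where "s = Inr (x, y)"
      unfolding T_simps by auto
    then show "0 \<le> sval ?H s \<and> sval ?H s \<le> 1"
    proof cases
      case 1 then show ?thesis using gwf_sval[OF w] by (simp add: T_simps T_prob)
    next
      case 2 then show ?thesis using vmax_bounds[OF w] by (simp add: T_simps T_prob)
    qed
  qed
  show ?thesis unfolding gwf_def by (intro conjI f1 d ar ne rd sv)
qed

lemma lift_max_strat:
  assumes "max_strat G \<sigma>'" shows "max_strat (transf G A \<sigma>) (lift_strat G A \<sigma>')"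
  unfolding max_strat_def
proof
  fix b assume "b \<in> Vmax (transf G A \<sigma>)"
  then obtain x where x: "b = Inl x" "x \<in> Vmax G" unfolding T_simps by blast
  have "(x, \<sigma>' x) \<in> arcs G" using assms x(2) unfolding max_strat_def by blast
  then show "(b, lift_strat G A \<sigma>' b) \<in> arcs (transf G A \<sigma>)"
    unfolding x(1) lift_Inl T_arc_iff .
qed

lemma lift_min_strat:
  assumes "min_strat G \<tau>" shows "min_strat (transf G A \<sigma>) (lift_strat G A \<tau>)"
  unfolding min_strat_def
proof
  fix b assume "b \<in> Vmin (transf G A \<sigma>)"
  then obtain x where x: "b = Inl x" "x \<in> Vmin G" unfolding T_simps by blast
  have "(x, \<tau> x) \<in> arcs G" using assms x(2) unfolding min_strat_def by blast
  then show "(b, lift_strat G A \<tau> b) \<in> arcs (transf G A \<sigma>)"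
    unfolding x(1) lift_Inl T_arc_iff .
qed



lemma K1:
  fixes G :: "('v, 'b) ssg_scheme"
  assumes w: "gwf G" and ms: "max_strat G \<sigma>" and x: "x \<in> verts G"
  shows "vmax (transf G A \<sigma>) (lift_strat G A \<sigma>) (Inl x) = vmax G \<sigma> x"
proof -
  let ?H = "transf G A \<sigma>"
  let ?v = "vmax G \<sigma>"
  let ?W = "vmax ?H (lift_strat G A \<sigma>)"
  let ?t = "br G \<sigma>"
  have wH: "gwf ?H" using gwf_transf[OF w] .
  define u :: "'v + 'v \<times> 'v \<Rightarrow> real" where "u b = (case b of Inl y \<Rightarrow> ?v y | Inr e \<Rightarrow> ?v (snd e))" for b
  have uh: "u (hsucc G A y z) = ?v z" for y z unfolding u_def hsucc_def by simp
  have up: "pval ?H (lift_strat G A \<sigma>) (lift_strat G A ?t) b \<le> u b" for b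
  proof (rule pval_least[OF wH])
    fix b
    show "h0 ?H b \<le> u b"
    proof (cases b)
      case (Inl y) then show ?thesis using h0_le_vmax[OF w] by (simp add: T_h0_Inl u_def)
    next
      case (Inr e)
      obtain a c where e: "e = (a, c)" by (cases e)
      show ?thesis using vmax_bounds[OF w, of \<sigma> c]
        unfolding Inr e h0_def u_def T_mem T_simps by simp
    qed
    show "next_exp ?H (lift_strat G A \<sigma>) (lift_strat G A ?t) u b \<le> u b"
    proof (cases b)
      case (Inl y)
      have "next_exp ?H (lift_strat G A \<sigma>) (lift_strat G A ?t) u b = next_exp G \<sigma> ?t ?v y"
        unfolding Inl T_next[OF w] uh by simp
      also have "\<dots> = ?v y" using vmax_fix[OF w] .
      finally show ?thesis unfolding Inl u_def by simp
    next
      case (Inr e) then show ?thesis by (simp add: T_next_Inr)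
    qed
  qed
  have le1: "?W (Inl y) \<le> ?v y" if "y \<in> verts G" for y
  proof -
    have "Inl y \<in> verts ?H" using that unfolding T_verts by blast
    then have "?W (Inl y) \<le> pval ?H (lift_strat G A \<sigma>) (lift_strat G A ?t) (Inl y)"
      using vmax_le_resp[OF wH lift_min_strat[OF br_min_strat[OF w]]] by blast
    also have "\<dots> \<le> u (Inl y)" using up .
    finally show ?thesis unfolding u_def by simp
  qed
  have sW: "?W (Inr (a, c)) = ?v c" if "(a, c) \<in> repl G A" for a c
  proof -
    have "Inr (a, c) \<in> Vsink ?H" using that unfolding T_mem by simp
    then show ?thesis using vmax_sink[OF wH] by (simp add: T_simps)
  qed
  have ge: "lfpM G \<sigma> y \<le> ?W (Inl y)" for y
  proof (rule lfpM_least[OF w])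
    fix y
    show "h0 G y \<le> ?W (Inl y)" using h0_le_vmax[OF wH, of "Inl y"] by (simp add: T_h0_Inl)
    show "mexp G \<sigma> (\<lambda>z. ?W (Inl z)) y \<le> ?W (Inl y)"
    proof (cases "y \<in> verts G")
      case True
      have m: "?W (Inl z) \<le> ?W (hsucc G A y z)" for z
      proof (cases "(y, z) \<in> repl G A")
        case True
        then have "z \<in> verts G" using repl_arcs gwf_arcs[OF w] by blast
        then show ?thesis using le1 sW[OF True] True unfolding hsucc_def by simp
      next
        case False then show ?thesis unfolding hsucc_def by simp
      qed
      have "mexp G \<sigma> (\<lambda>z. ?W (Inl z)) y \<le> mexp G \<sigma> (\<lambda>z. ?W (hsucc G A y z)) y"
        by (rule mexp_mono[OF w]) (rule m)
      also have "\<dots> = mexp ?H (lift_strat G A \<sigma>) ?W (Inl y)" using T_mexp[OF w] by simp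
      also have "\<dots> = ?W (Inl y)"
        using vmax_mexp_fix[OF wH lift_max_strat[OF ms]] True unfolding T_verts by blast
      finally show ?thesis .
    next
      case False
      then have "y \<notin> Vmax G" "y \<notin> Vmin G" "y \<notin> Vrand G" unfolding verts_def by auto
      then show ?thesis by (simp add: mexp_def)
    qed
  qed
  show ?thesis using ge[of x] le1[OF x] vmax_lfpM[OF w x] by simp
qed

lemma K1h:
  assumes w: "gwf G" and ms: "max_strat G \<sigma>" and y: "y \<in> verts G"
  shows "vmax (transf G A \<sigma>) (lift_strat G A \<sigma>) (hsucc G A x y) = vmax G \<sigma> y"
proof (cases "(x, y) \<in> repl G A")
  case True
  have "Inr (x, y) \<in> Vsink (transf G A \<sigma>)" using True unfolding T_mem by simp
  then show ?thesis using vmax_sink[OF gwf_transf[OF w]] True unfolding hsucc_def by (simp add: T_simps)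
next
  case False then show ?thesis using K1[OF w ms y] unfolding hsucc_def by simp
qed

lemma K2:
  assumes w: "gwf G" and ms: "max_strat G \<sigma>" and x: "x \<in> Vmax G" and y: "y \<in> outn G x"
    and lt: "vmax G \<sigma> y > vmax G \<sigma> x"
  shows "max_strat G (\<sigma>(x := y)) \<and> improves G A \<sigma> (\<sigma>(x := y))"
proof
  let ?s = "\<sigma>(x := y)"
  let ?H = "transf G A \<sigma>"
  let ?W = "vmax ?H (lift_strat G A \<sigma>)"
  let ?W' = "vmax ?H (lift_strat G A ?s)"
  have wH: "gwf ?H" using gwf_transf[OF w] .
  show ms': "max_strat G ?s" using ms y unfolding max_strat_def outn_def by auto
  have xv: "x \<in> verts G" and yv: "y \<in> verts G" using wf_outn_verts[OF w y] by auto
  have hyp: "lift_strat G A ?s b = lift_strat G A \<sigma> b \<or> ?W (lift_strat G A ?s b) > ?W b"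
    if bH: "b \<in> Vmax ?H" for b
  proof -
    obtain z where z: "b = Inl z" using bH unfolding T_simps by blast
    show ?thesis
    proof (cases "z = x")
      case True
      have "?W (lift_strat G A ?s b) = vmax G \<sigma> y"
        unfolding z True lift_Inl using K1h[OF w ms yv] by simp
      moreover have "?W b = vmax G \<sigma> x" unfolding z True using K1[OF w ms xv] .
      ultimately show ?thesis using lt by simp
    next
      case False then show ?thesis unfolding z lift_Inl by simp
    qed
  qed
  have le: "?W b \<le> ?W' b" if "b \<in> verts ?H" for b
    using improve_generic[OF wH lift_max_strat[OF ms] lift_max_strat[OF ms'] hyp that] .
  have lx: "?W (lift_strat G A ?s (Inl x)) > ?W (Inl x)"
    unfolding lift_Inl using K1h[OF w ms yv] K1[OF w ms xv] lt by simp
  have xH: "Inl x \<in> Vmax ?H" using x unfolding T_mem .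
  have strict: "?W (Inl x) < ?W' (Inl x)"
    using improve_generic_strict[OF wH lift_max_strat[OF ms'] xH lx le] .
  show "improves G A \<sigma> ?s"
    unfolding improves_def Let_def
  proof (intro conjI ballI impI)
    fix z assume "z \<in> verts G"
    then show "?W (Inl z) \<le> ?W' (Inl z)" using le unfolding T_verts by blast
  next
    show "\<exists>z\<in>verts G. ?W (Inl z) \<noteq> ?W' (Inl z)" using xv strict by force
  next
    fix z assume "z \<in> Vmax G" "?W' (Inl z) = ?W (Inl z)"
    then have "z \<noteq> x" using strict by force
    then show "?s z = \<sigma> z" by simp
  qed
qed

lemma K3:
  fixes G :: "('v, 'b) ssg_scheme"
  assumes w: "gwf G" and ms: "max_strat G \<sigma>" and ms': "max_strat G \<sigma>'"
    and imp: "improves G A \<sigma> \<sigma>'"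
  shows "(\<forall>x\<in>verts G. vmax G \<sigma> x \<le> vmax G \<sigma>' x) \<and> (\<exists>x\<in>verts G. vmax G \<sigma> x \<noteq> vmax G \<sigma>' x)"
proof -
  let ?H = "transf G A \<sigma>"
  let ?W = "vmax ?H (lift_strat G A \<sigma>)"
  let ?W' = "vmax ?H (lift_strat G A \<sigma>')"
  let ?v = "vmax G \<sigma>"
  let ?t = "br G \<sigma>'"
  have wH: "gwf ?H" using gwf_transf[OF w] .
  have i1: "\<And>x. x \<in> verts G \<Longrightarrow> ?W (Inl x) \<le> ?W' (Inl x)"
    and i2: "\<exists>x\<in>verts G. ?W (Inl x) \<noteq> ?W' (Inl x)"
    and i3: "\<And>z. z \<in> Vmax G \<Longrightarrow> ?W' (Inl z) = ?W (Inl z) \<Longrightarrow> \<sigma>' z = \<sigma> z"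
    using imp unfolding improves_def Let_def by blast+
  have k1: "?W (Inl x) = ?v x" if "x \<in> verts G" for x using K1[OF w ms that] .
  define g where "g x = ?W' (Inl x)" for x
  have vg: "?v x \<le> g x" if "x \<in> verts G" for x using i1[OF that] k1[OF that] unfolding g_def by simp
  have mt: "min_strat G ?t" using br_min_strat[OF w] .
  have mtH: "min_strat ?H (lift_strat G A ?t)" using lift_min_strat[OF mt] .
  have hs: "?W' (hsucc G A x y) \<le> g y" for x y
  proof (cases "(x, y) \<in> repl G A")
    case True
    then have yv: "y \<in> verts G" using repl_arcs gwf_arcs[OF w] by blast
    have "Inr (x, y) \<in> Vsink ?H" using True unfolding T_mem by simp
    then have "?W' (Inr (x, y)) = ?v y" using vmax_sink[OF wH] by (simp add: T_simps)
    then show ?thesis using vg[OF yv] True unfolding hsucc_def by simp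
  next
    case False then show ?thesis unfolding hsucc_def g_def by simp
  qed
  have gnext: "g x \<le> next_exp G \<sigma>' ?t (\<lambda>y. ?W' (hsucc G A x y)) x" if "x \<in> verts G" for x
  proof -
    have "Inl x \<in> verts ?H" using that unfolding T_verts by blast
    then have "?W' (Inl x) \<le> next_exp ?H (lift_strat G A \<sigma>') (lift_strat G A ?t) ?W' (Inl x)"
      using vmax_le_next[OF wH mtH] by blast
    then show ?thesis unfolding g_def T_next[OF w] .
  qed
  have main: "g x \<le> pval G \<sigma>' ?t x" if xv: "x \<in> verts G" for x
  proof (rule max_principle[OF w ms' mt _ _ _ xv])
    fix x assume xv: "x \<in> verts G"
    have "next_exp G \<sigma>' ?t (\<lambda>y. ?W' (hsucc G A x y)) x \<le> next_exp G \<sigma>' ?t g x"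
      by (rule next_exp_mono[OF w]) (rule hs)
    then show "g x \<le> next_exp G \<sigma>' ?t g x" using gnext[OF xv] by linarith
  next
    fix s assume s: "s \<in> Vsink G"
    have "Inl s \<in> Vsink ?H" using s unfolding T_mem .
    then show "g s \<le> sval G s" unfolding g_def using vmax_sink[OF wH] by (simp add: T_simps)
  next
    fix S m assume S: "S \<subseteq> verts G - Vsink G" "S \<noteq> {}" "closedS G \<sigma>' ?t S"
      and gm: "\<And>x. x \<in> S \<Longrightarrow> g x = m"
    have Sv: "\<And>x. x \<in> S \<Longrightarrow> x \<in> verts G" using S(1) by blast
    have cS: "csucc G \<sigma>' ?t x \<subseteq> S" if "x \<in> S" for x using S(3) that unfolding closedS_def by blast
    have F1: "?W' (hsucc G A x y) = m" if xS: "x \<in> S" and y: "y \<in> csucc G \<sigma>' ?t x" for x y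
    proof (rule mp1[OF w _ _ y])
      fix z assume "z \<in> csucc G \<sigma>' ?t x"
      then have "z \<in> S" using cS[OF xS] by blast
      then show "?W' (hsucc G A x z) \<le> m" using hs[of x z] gm by simp
    next
      show "m \<le> next_exp G \<sigma>' ?t (\<lambda>y. ?W' (hsucc G A x y)) x"
        using gnext[OF Sv[OF xS]] gm[OF xS] by simp
    qed
    define E where "E = {x \<in> S. ?v x = m}"
    show "m \<le> 0"
    proof (cases "E = {}")
      case True
      have clo: "closedS ?H (lift_strat G A \<sigma>') (lift_strat G A ?t) (Inl ` S)"
        unfolding closedS_def
      proof
        fix b :: "'v + 'v \<times> 'v" assume "b \<in> Inl ` S"
        then obtain x where b: "b = Inl x" and xS: "x \<in> S" by blast
        show "csucc ?H (lift_strat G A \<sigma>') (lift_strat G A ?t) b \<subseteq> Inl ` S"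
          unfolding b T_csucc[OF w]
        proof
          fix c assume "c \<in> hsucc G A x ` csucc G \<sigma>' ?t x"
          then obtain y where c: "c = hsucc G A x y" and y: "y \<in> csucc G \<sigma>' ?t x" by blast
          have yS: "y \<in> S" using cS[OF xS] y by blast
          have "(x, y) \<notin> repl G A"
          proof
            assume r: "(x, y) \<in> repl G A"
            have "Inr (x, y) \<in> Vsink ?H" using r unfolding T_mem by simp
            then have "?W' (Inr (x, y)) = ?v y" using vmax_sink[OF wH] by (simp add: T_simps)
            moreover have "?W' (Inr (x, y)) = m" using F1[OF xS y] r unfolding hsucc_def by simp
            ultimately have "y \<in> E" unfolding E_def using yS by simp
            then show False using True by blast
          qed
          then show "c \<in> Inl ` S" using c yS unfolding hsucc_def by simp
        qed
      qed
      have dis: "Inl ` S \<inter> Vsink ?H = {}" using S(1) unfolding T_simps by blast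
      obtain x where xS: "x \<in> S" using S(2) by blast
      have "m = ?W' (Inl x)" using gm[OF xS] unfolding g_def by simp
      also have "\<dots> \<le> pval ?H (lift_strat G A \<sigma>') (lift_strat G A ?t) (Inl x)"
        using vmax_le_resp[OF wH mtH] Sv[OF xS] unfolding T_verts by blast
      also have "\<dots> = 0" using pval_closed[OF clo dis] xS by blast
      finally show ?thesis .
    next
      case False
      have sE: "csucc G \<sigma> ?t x = csucc G \<sigma>' ?t x" if xE: "x \<in> E" for x
      proof (cases "x \<in> Vmax G")
        case True
        have "?W' (Inl x) = ?W (Inl x)"
          using xE gm k1 Sv unfolding E_def g_def by auto
        then show ?thesis using i3[OF True] by (simp add: csucc_def)
      next
        case False then show ?thesis by (simp add: csucc_def)
      qed
      have clo: "closedS G \<sigma> ?t E"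
        unfolding closedS_def
      proof (intro ballI subsetI)
        fix x y assume xE: "x \<in> E" and y: "y \<in> csucc G \<sigma> ?t x"
        have xS: "x \<in> S" and vx: "?v x = m" using xE unfolding E_def by auto
        have yS: "y \<in> S" using cS[OF xS] y sE[OF xE] by blast
        have "?v y = m"
        proof (rule mp1[OF w _ _ y])
          fix z assume "z \<in> csucc G \<sigma> ?t x"
          then have "z \<in> S" using cS[OF xS] sE[OF xE] by blast
          then show "?v z \<le> m" using vg[OF Sv] gm by fastforce
        next
          show "m \<le> next_exp G \<sigma> ?t ?v x" using vmax_le_next[OF w mt Sv[OF xS], of \<sigma>] vx by simp
        qed
        then show "y \<in> E" using yS unfolding E_def by simp
      qed
      have dis: "E \<inter> Vsink G = {}" using S(1) unfolding E_def by blast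
      obtain x where xE: "x \<in> E" using False by blast
      have "m = ?v x" using xE unfolding E_def by simp
      also have "\<dots> \<le> pval G \<sigma> ?t x" using vmax_le_resp[OF w mt] xE Sv unfolding E_def by blast
      also have "\<dots> = 0" using pval_closed[OF clo dis xE] .
      finally show ?thesis .
    qed
  qed
  have le: "?v x \<le> vmax G \<sigma>' x" if "x \<in> verts G" for x
    using vg[OF that] main[OF that] unfolding vmax_def by simp
  obtain x0 where x0: "x0 \<in> verts G" "?W (Inl x0) \<noteq> ?W' (Inl x0)" using i2 by blast
  have "?v x0 < vmax G \<sigma>' x0"
    using i1[OF x0(1)] x0 k1[OF x0(1)] main[OF x0(1)] unfolding g_def vmax_def by simp
  then show ?thesis using le x0(1) by force
qed



lemma miter_cong:
  assumes "\<And>x. x \<in> Vmax K \<Longrightarrow> \<sigma>1 x = \<sigma>2 x"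
  shows "miter K \<sigma>1 n = miter K \<sigma>2 n"
proof (induction n)
  case 0 show ?case by (rule ext) simp
next
  case (Suc n) show ?case by (rule ext) (simp add: Suc mexp_def assms)
qed

lemma vmax_cong:
  assumes w: "gwf K" and e: "\<And>x. x \<in> Vmax K \<Longrightarrow> \<sigma>1 x = \<sigma>2 x" and x: "x \<in> verts K"
  shows "vmax K \<sigma>1 x = vmax K \<sigma>2 x"
  using vmax_lfpM[OF w x, of \<sigma>1] vmax_lfpM[OF w x, of \<sigma>2] miter_cong[of K \<sigma>1 \<sigma>2, OF e]
  unfolding lfpM_def by simp

theorem theorem22:
  fixes G :: "'v ssg"
  assumes "valid_ssg G"
  shows "(\<forall>\<sigma>. max_strat G \<sigma> \<longrightarrow> \<not> optimal_pair G \<sigma> (br G \<sigma>) \<longrightarrow>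
            (\<forall>A \<subseteq> arcs G. \<exists>\<sigma>'. max_strat G \<sigma>' \<and> improves G A \<sigma> \<sigma>'))
       \<and> \<not> (\<exists>s :: nat \<Rightarrow> ('v \<Rightarrow> 'v). \<forall>i. gsia_step G (s i) (s (Suc i)))
       \<and> (\<forall>\<sigma>. max_strat G \<sigma> \<longrightarrow> \<not> (\<exists>\<sigma>'. gsia_step G \<sigma> \<sigma>') \<longrightarrow> optimal_pair G \<sigma> (br G \<sigma>))"
proof -
  have w: "gwf G" using valid_wf[OF assms] .
  have P1: "\<forall>\<sigma>. max_strat G \<sigma> \<longrightarrow> \<not> optimal_pair G \<sigma> (br G \<sigma>) \<longrightarrow>
            (\<forall>A \<subseteq> arcs G. \<exists>\<sigma>'. max_strat G \<sigma>' \<and> improves G A \<sigma> \<sigma>')"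
  proof (intro allI impI)
    fix \<sigma> :: "'v \<Rightarrow> 'v" and A
    assume ms: "max_strat G \<sigma>" and no: "\<not> optimal_pair G \<sigma> (br G \<sigma>)"
    obtain x y where x: "x \<in> Vmax G" and y: "y \<in> outn G x" and lt: "\<not> vmax G \<sigma> y \<le> vmax G \<sigma> x"
      using opt_if_no_switch[OF w ms] no by blast
    have "vmax G \<sigma> y > vmax G \<sigma> x" using lt by simp
    then show "\<exists>\<sigma>'. max_strat G \<sigma>' \<and> improves G A \<sigma> \<sigma>'"
      using K2[OF w ms x y] by blast
  qed
  have P3: "\<forall>\<sigma>. max_strat G \<sigma> \<longrightarrow> \<not> (\<exists>\<sigma>'. gsia_step G \<sigma> \<sigma>') \<longrightarrow> optimal_pair G \<sigma> (br G \<sigma>)"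
  proof (intro allI impI)
    fix \<sigma> :: "'v \<Rightarrow> 'v"
    assume ms: "max_strat G \<sigma>" and ns: "\<not> (\<exists>\<sigma>'. gsia_step G \<sigma> \<sigma>')"
    show "optimal_pair G \<sigma> (br G \<sigma>)"
    proof (rule ccontr)
      assume no: "\<not> optimal_pair G \<sigma> (br G \<sigma>)"
      have "{} \<subseteq> arcs G" by simp
      then obtain \<sigma>' where "max_strat G \<sigma>'" "improves G {} \<sigma> \<sigma>'" using P1 ms no by blast
      then have "gsia_step G \<sigma> \<sigma>'" unfolding gsia_step_def using ms no by blast
      then show False using ns by blast
    qed
  qed
  have P2: "\<not> (\<exists>s :: nat \<Rightarrow> ('v \<Rightarrow> 'v). \<forall>i. gsia_step G (s i) (s (Suc i)))"
  proof
    assume "\<exists>s :: nat \<Rightarrow> ('v \<Rightarrow> 'v). \<forall>i. gsia_step G (s i) (s (Suc i))"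
    then obtain s :: "nat \<Rightarrow> ('v \<Rightarrow> 'v)" where s: "\<And>i. gsia_step G (s i) (s (Suc i))" by blast
    have msi: "max_strat G (s i)" for i using s[of i] unfolding gsia_step_def by blast
    have st: "(\<forall>x\<in>verts G. vmax G (s i) x \<le> vmax G (s (Suc i)) x) \<and>
              (\<exists>x\<in>verts G. vmax G (s i) x \<noteq> vmax G (s (Suc i)) x)" for i
    proof -
      obtain A where "max_strat G (s (Suc i))" "improves G A (s i) (s (Suc i))"
        using s[of i] unfolding gsia_step_def by blast
      then show ?thesis using K3[OF w msi] by blast
    qed
    define V where "V i = (\<lambda>x. if x \<in> verts G then vmax G (s i) x else 0)" for i
    have mono: "V i x \<le> V j x" if "i \<le> j" for i j x
      using that
    proof (induction j rule: dec_induct)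
      case base then show ?case by simp
    next
      case (step j)
      have "V j x \<le> V (Suc j) x" using st[of j] unfolding V_def by auto
      then show ?case using step by linarith
    qed
    have injV: "inj V"
    proof (rule linorder_injI)
      fix i j :: nat assume ij: "i < j"
      obtain x where x: "x \<in> verts G" "vmax G (s i) x \<noteq> vmax G (s (Suc i)) x" using st[of i] by blast
      have "V i x < V (Suc i) x" using x st[of i] unfolding V_def by force
      also have "\<dots> \<le> V j x" using mono ij by simp
      finally show "V i \<noteq> V j" by auto
    qed
    define R where "R i = restrict (s i) (Vmax G)" for i
    have RP: "R i \<in> (\<Pi>\<^sub>E x \<in> Vmax G. verts G)" for i
    proof -
      have "s i x \<in> verts G" if "x \<in> Vmax G" for x
        using msi[of i] that gwf_arcs[OF w] unfolding max_strat_def by blast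
      then show ?thesis unfolding R_def by simp
    qed
    have injR: "inj R"
    proof (rule injI)
      fix i j assume "R i = R j"
      then have e: "s i x = s j x" if "x \<in> Vmax G" for x
        using that unfolding R_def by (metis restrict_apply')
      have "V i = V j" unfolding V_def using vmax_cong[OF w e] by (auto intro!: ext)
      then show "i = j" using injV by (simp add: inj_eq)
    qed
    have fin: "finite (\<Pi>\<^sub>E x \<in> Vmax G. verts G)"
    proof (rule finite_PiE)
      show "finite (Vmax G)" using gwf_fin[OF w] unfolding verts_def by simp
      show "finite (verts G)" for x using gwf_fin[OF w] .
    qed
    have "finite (range R)" using RP by (intro finite_subset[OF _ fin]) auto
    then have "finite (UNIV :: nat set)" using injR finite_imageD by blast
    then show False by simp
  qed
  show ?thesis using P1 P2 P3 by blast
qed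

end
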